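(* In the setting described in the context, for every $t\in\{0,1,\dots,T\}$ the gradient $\nabla V^{(t)}_\theta$ (with respect to $(\theta,s)$), viewed as a function of $(\theta,s)$, is Lipschitz with constant $L_{\nabla V}^{(t)}=44T^5\bar L_{R_\theta}\bar L_{f_\theta}^{4(T-t-1)}$.
   Context: Transitions $s_{t+1}=f(s_t,a_t)+\zeta_t$ with $\zeta_t\sim p(\zeta)$ i.i.d.; deterministic policy $\pi_\theta$, $\theta\in\Theta\subseteq\mathbb{R}^{d_\Theta}$; $f_\theta(s)=f(s,\pi_\theta(s))$ and $R_\theta(s)=R(s,\pi_\theta(s))$, viewed as functions of $(\theta,s)$. Value functions: $V^{(T)}_\theta\equiv 0$ and $V^{(t)}_\theta(s)=R_\theta(s)+\mathbb{E}_{p(\zeta)}[V^{(t+1)}_\theta(f_\theta(s)+\zeta)]$ for $t=0,\dots,T-1$. $L_h$ denotes a Lipschitz constant (Euclidean norm, matrices unrolled as vectors) of $h$ jointly in $(\theta,s)$, and $\bar L_h=\max\{L_{\nabla h},L_h,1\}$. Standing assumption: $f_\theta,R_\theta$ are Lipschitz and twice continuously differentiable with Lipschitz first derivative. *)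

theory Defs
  imports "HOL-Analysis.Analysis" "HOL-Probability.Probability"
begin

definition frob :: "('a::euclidean_space \<Rightarrow>\<^sub>L 'b::real_normed_vector) \<Rightarrow> real" where
  "frob A = sqrt (\<Sum>b\<in>Basis. (norm (blinfun_apply A b))\<^sup>2)"

definition Lbar :: "real \<Rightarrow> real \<Rightarrow> real" where
  "Lbar LD L = max LD (max L 1)"

definition fcl :: "('s \<Rightarrow> 'a \<Rightarrow> 's) \<Rightarrow> ('th \<Rightarrow> 's \<Rightarrow> 'a) \<Rightarrow> 'th \<times> 's \<Rightarrow> 's" where
  "fcl f pol = (\<lambda>(th, s). f s (pol th s))"

definition Rcl :: "('s \<Rightarrow> 'a \<Rightarrow> real) \<Rightarrow> ('th \<Rightarrow> 's \<Rightarrow> 'a) \<Rightarrow> 'th \<times> 's \<Rightarrow> real" where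
  "Rcl R pol = (\<lambda>(th, s). R s (pol th s))"

primrec Wv :: "('th \<times> 's \<Rightarrow> 's::real_normed_vector) \<Rightarrow> ('th \<times> 's \<Rightarrow> real) \<Rightarrow> 's measure
               \<Rightarrow> nat \<Rightarrow> 'th \<times> 's \<Rightarrow> real" where
  "Wv fth Rth p 0 = (\<lambda>x. 0)"
| "Wv fth Rth p (Suc n) = (\<lambda>x. Rth x + (\<integral>z. Wv fth Rth p n (fst x, fth x + z) \<partial>p))"

text \<open>V^{(t)} for horizon T (meaningful for t \<le> T): V^{(t)} = W (T - t).\<close>
definition Vt :: "('th \<times> 's \<Rightarrow> 's::real_normed_vector) \<Rightarrow> ('th \<times> 's \<Rightarrow> real) \<Rightarrow> 's measure
               \<Rightarrow> nat \<Rightarrow> nat \<Rightarrow> 'th \<times> 's \<Rightarrow> real" where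
  "Vt fth Rth p T t = Wv fth Rth p (T - t)"

end

theory Submission
  imports Defs
begin


lemma frob_bound:
  fixes A :: "'a::euclidean_space \<Rightarrow>\<^sub>L 'b::real_normed_vector"
  shows "norm (A h) \<le> frob A * norm h"
proof -
  have "A h = A (\<Sum>b\<in>Basis. (h \<bullet> b) *\<^sub>R b)" by (simp add: euclidean_representation)
  also have "\<dots> = (\<Sum>b\<in>Basis. (h \<bullet> b) *\<^sub>R A b)"
    by (simp add: blinfun.sum_right blinfun.scaleR_right)
  finally have "norm (A h) \<le> (\<Sum>b\<in>Basis. \<bar>h \<bullet> b\<bar> * \<bar>norm (A b)\<bar>)"
    using norm_sum[of "\<lambda>b. (h \<bullet> b) *\<^sub>R A b" Basis] by simp
  also have "\<dots> \<le> L2_set (\<lambda>b. h \<bullet> b) Basis * L2_set (\<lambda>b. norm (A b)) Basis"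
    by (rule L2_set_mult_ineq)
  also have "L2_set (\<lambda>b. h \<bullet> b) Basis = norm h"
    using euclidean_dist_l2[of h 0] by (simp add: dist_real_def L2_set_def)
  also have "L2_set (\<lambda>b. norm (A b)) Basis = frob A"
    by (simp add: L2_set_def frob_def)
  finally show ?thesis by (simp add: mult.commute)
qed

lemma frob_nonneg: "0 \<le> frob A" by (simp add: frob_def sum_nonneg)

lemma norm_le_frob: "norm A \<le> frob A"
  by (rule norm_blinfun_bound[OF frob_nonneg frob_bound])

definition adj :: "('a::euclidean_space \<Rightarrow>\<^sub>L 'b::real_inner) \<Rightarrow> 'b \<Rightarrow> 'a" where
  "adj A v = (\<Sum>b\<in>Basis. (v \<bullet> A b) *\<^sub>R b)"

lemma adj_inner: "adj A v \<bullet> h = v \<bullet> A h"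
proof -
  have "v \<bullet> A h = v \<bullet> A (\<Sum>b\<in>Basis. (h \<bullet> b) *\<^sub>R b)" by (simp add: euclidean_representation)
  also have "\<dots> = (\<Sum>b\<in>Basis. (h \<bullet> b) * (v \<bullet> A b))"
    by (simp add: blinfun.sum_right blinfun.scaleR_right inner_sum_right)
  also have "\<dots> = adj A v \<bullet> h"
    by (simp add: adj_def inner_sum_left inner_sum_right mult.commute inner_commute)
  finally show ?thesis by simp
qed

lemma adj_diff_left: "adj (A - B) v = adj A v - adj B v"
  by (simp add: adj_def blinfun.diff_left inner_diff_right scaleR_diff_left sum_subtractf)

lemma adj_diff_right: "adj A (v - w) = adj A v - adj A w"
  by (simp add: adj_def inner_diff_left scaleR_diff_left sum_subtractf)

lemma adj_norm: "norm (adj A v) \<le> norm A * norm v"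
proof -
  have "(norm (adj A v))\<^sup>2 = adj A v \<bullet> adj A v" by (simp add: power2_norm_eq_inner)
  also have "\<dots> = v \<bullet> A (adj A v)" by (rule adj_inner)
  also have "\<dots> \<le> norm v * norm (A (adj A v))" by (rule Cauchy_Schwarz_ineq2[THEN order_trans[OF abs_ge_self]])
  also have "\<dots> \<le> norm v * (norm A * norm (adj A v))"
    by (intro mult_left_mono norm_blinfun) simp
  finally have "norm (adj A v) * norm (adj A v) \<le> (norm A * norm v) * norm (adj A v)"
    by (simp add: power2_eq_square mult_ac)
  then show ?thesis
    by (cases "norm (adj A v) = 0") (auto simp: mult_le_cancel_right)
qed



lemma deriv_norm_le_lip:
  fixes g :: "'a::real_normed_vector \<Rightarrow> 'b::real_normed_vector"
  assumes D: "open D" "x \<in> D" and dg: "(g has_derivative A) (at x)"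
    and lip: "\<forall>y\<in>D. \<forall>z\<in>D. dist (g y) (g z) \<le> L * dist y z"
  shows "norm (A h) \<le> L * norm h"
proof (cases "h = 0")
  case True
  have "linear A" using dg by (simp add: has_derivative_linear)
  then show ?thesis using True by (simp add: linear_0)
next
  case False
  then have hpos: "norm h > 0" by simp
  have bl: "bounded_linear A" using dg by (simp add: has_derivative_bounded_linear)
  obtain e where e: "e > 0" "ball x e \<subseteq> D" using D open_contains_ball by blast
  show ?thesis
  proof (rule field_le_epsilon)
    fix \<epsilon> :: real assume ep: "0 < \<epsilon>"
    have q: "((\<lambda>y. norm ((g y - g x) - A (y - x)) / norm (y - x)) \<longlongrightarrow> 0) (at x)"
      using dg by (simp add: has_derivative_iff_norm)
    have "\<forall>\<^sub>F y in at x. norm ((g y - g x) - A (y - x)) / norm (y - x) < \<epsilon> / norm h"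
      using q ep hpos by (simp add: order_tendstoD(2))
    then obtain d where d: "d > 0" and dd: "\<And>y. y \<noteq> x \<Longrightarrow> dist y x < d \<Longrightarrow>
        norm ((g y - g x) - A (y - x)) / norm (y - x) < \<epsilon> / norm h"
      unfolding eventually_at by blast
    define t where "t = min d e / 2 / norm h"
    have tpos: "t > 0" using d e hpos by (simp add: t_def)
    define y where "y = x + t *\<^sub>R h"
    have ny: "norm (y - x) = t * norm h" using tpos by (simp add: y_def)
    have nyl: "t * norm h < d" "t * norm h < e" using d e hpos by (simp_all add: t_def)
    have yx: "y \<noteq> x" using tpos False by (simp add: y_def)
    have yD: "y \<in> D" using e nyl ny by (auto simp: dist_norm norm_minus_commute intro!: subsetD[OF e(2)])
    have "norm ((g y - g x) - A (y - x)) / norm (y - x) < \<epsilon> / norm h"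
      using dd[OF yx] ny nyl by (simp add: dist_norm)
    then have r: "norm ((g y - g x) - A (y - x)) \<le> \<epsilon> * t"
      using ny tpos hpos by (simp add: divide_simps mult_ac)
    have "norm (g y - g x) \<le> L * (t * norm h)"
      using lip yD D(2) ny by (metis dist_norm)
    have Ay: "A (y - x) = t *\<^sub>R A h" using bl by (simp add: y_def linear_simps(5) bounded_linear.linear)
    have "t * norm (A h) = norm (A (y - x))" using Ay tpos by simp
    also have "\<dots> \<le> norm (g y - g x) + norm ((g y - g x) - A (y - x))"
      by (metis add.commute norm_triangle_sub diff_diff_eq2 norm_minus_commute)
    also have "\<dots> \<le> L * (t * norm h) + \<epsilon> * t"
      using \<open>norm (g y - g x) \<le> L * (t * norm h)\<close> r by linarith
    finally have "t * norm (A h) \<le> t * (L * norm h + \<epsilon>)" by (simp add: algebra_simps)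
    then show "norm (A h) \<le> L * norm h + \<epsilon>" using tpos by simp
  qed
qed

lemma remainder_bound:
  fixes W :: "'a::real_inner \<Rightarrow> real"
  assumes seg: "closed_segment a b \<subseteq> D"
    and dW: "\<And>y. y \<in> D \<Longrightarrow> (W has_derivative (\<lambda>h. G y \<bullet> h)) (at y)"
    and lip: "\<And>y. y \<in> D \<Longrightarrow> norm (G y - G a) \<le> K * dist y a" and K: "K \<ge> 0"
  shows "norm (W b - W a - G a \<bullet> (b - a)) \<le> K * (norm (b - a))\<^sup>2"
proof -
  let ?g = "\<lambda>y. W y - G a \<bullet> y"
  have der: "(?g has_derivative (\<lambda>h. (G y - G a) \<bullet> h)) (at y within closed_segment a b)"
    if "y \<in> closed_segment a b" for y
  proof -
    have "(?g has_derivative (\<lambda>h. G y \<bullet> h - G a \<bullet> h)) (at y)"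
      using that seg dW[of y] by (intro derivative_eq_intros) (auto simp: subset_iff)
    then show ?thesis by (simp add: inner_diff_left has_derivative_at_withinI)
  qed
  have onb: "onorm (\<lambda>h. (G y - G a) \<bullet> h) \<le> K * norm (b - a)" if "y \<in> closed_segment a b" for y
  proof -
    have "onorm (\<lambda>h. (G y - G a) \<bullet> h) \<le> norm (G y - G a)"
      by (rule onorm_bound) (auto simp: Cauchy_Schwarz_ineq2)
    also have "\<dots> \<le> K * dist y a" using lip that seg by auto
    also have "dist y a \<le> norm (b - a)"
      using segment_bound1[OF that] by (simp add: dist_norm)
    finally show ?thesis using K by (simp add: mult_left_mono order_trans)
  qed
  have "norm (?g b - ?g a) \<le> K * norm (b - a) * norm (b - a)"
    by (rule differentiable_bound[OF convex_closed_segment der onb]) auto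
  then show ?thesis by (simp add: inner_diff_right power2_eq_square algebra_simps)
qed



lemma int_norm_le:
  fixes g :: "'z \<Rightarrow> 'b::{banach,second_countable_topology}"
  assumes "prob_space p" "integrable p g" "\<And>z. norm (g z) \<le> M"
  shows "norm (integral\<^sup>L p g) \<le> M"
proof -
  interpret prob_space p by fact
  have "norm (integral\<^sup>L p g) \<le> (\<integral>z. norm (g z) \<partial>p)" by (rule integral_norm_bound)
  also have "\<dots> \<le> (\<integral>z. M \<partial>p)"
    using assms by (intro integral_mono) auto
  also have "\<dots> = M" by (simp add: prob_space)
  finally show ?thesis .
qed

lemma int_lin_diff_le:
  fixes g1 g2 :: "'z \<Rightarrow> 'b::{banach,second_countable_topology}"
    and c :: "'b \<Rightarrow> 'c::{banach,second_countable_topology}"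
  assumes "prob_space p" "integrable p g1" "integrable p g2" "bounded_linear c"
    and "\<And>z. norm (c (g1 z) - c (g2 z)) \<le> M"
  shows "norm (c (integral\<^sup>L p g1) - c (integral\<^sup>L p g2)) \<le> M"
proof -
  have "c (integral\<^sup>L p g1) - c (integral\<^sup>L p g2) = integral\<^sup>L p (\<lambda>z. c (g1 z) - c (g2 z))"
    using assms by (simp add: integral_bounded_linear[symmetric] integrable_bounded_linear)
  also have "norm \<dots> \<le> M"
    using assms by (intro int_norm_le) (auto intro: integrable_bounded_linear)
  finally show ?thesis .
qed

lemma int_lin_le:
  fixes g :: "'z \<Rightarrow> 'b::{banach,second_countable_topology}"
    and c :: "'b \<Rightarrow> 'c::{banach,second_countable_topology}"
  assumes "prob_space p" "integrable p g" "bounded_linear c"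
    and "\<And>z. norm (c (g z)) \<le> M"
  shows "norm (c (integral\<^sup>L p g)) \<le> M"
  using assms int_norm_le[of p "\<lambda>z. c (g z)" M]
  by (simp add: integral_bounded_linear integrable_bounded_linear)



lemma nfst: "norm (fst v) \<le> norm v" by (metis norm_fst_le prod.collapse)
lemma nsnd: "norm (snd v) \<le> norm v" by (metis norm_snd_le prod.collapse)

locale lset =
  fixes \<Theta> :: "'th::euclidean_space set" and fth :: "'th \<times> 's::euclidean_space \<Rightarrow> 's"
    and Rth :: "'th \<times> 's \<Rightarrow> real" and p :: "'s measure" and N :: nat
    and Df :: "'th \<times> 's \<Rightarrow> ('th \<times> 's) \<Rightarrow>\<^sub>L 's" and DR :: "'th \<times> 's \<Rightarrow> ('th \<times> 's) \<Rightarrow>\<^sub>L real"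
    and l r :: real
  assumes Theta_open: "open \<Theta>" and prob: "prob_space p" and sets_p: "sets p = sets borel"
    and integ: "\<And>n x. n < N \<Longrightarrow> x \<in> \<Theta> \<times> UNIV \<Longrightarrow> integrable p (\<lambda>z. Wv fth Rth p n (fst x, fth x + z))"
    and f_lip: "\<forall>x\<in>\<Theta> \<times> UNIV. \<forall>y\<in>\<Theta> \<times> UNIV. dist (fth x) (fth y) \<le> l * dist x y"
    and f_der: "\<forall>x\<in>\<Theta> \<times> UNIV. (fth has_derivative blinfun_apply (Df x)) (at x)"
    and Df_lip: "\<forall>x\<in>\<Theta> \<times> UNIV. \<forall>y\<in>\<Theta> \<times> UNIV. frob (Df x - Df y) \<le> l * dist x y"
    and R_lip: "\<forall>x\<in>\<Theta> \<times> UNIV. \<forall>y\<in>\<Theta> \<times> UNIV. dist (Rth x) (Rth y) \<le> r * dist x y"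
    and R_der: "\<forall>x\<in>\<Theta> \<times> UNIV. (Rth has_derivative blinfun_apply (DR x)) (at x)"
    and DR_lip: "\<forall>x\<in>\<Theta> \<times> UNIV. \<forall>y\<in>\<Theta> \<times> UNIV. frob (DR x - DR y) \<le> r * dist x y"
    and l1: "1 \<le> l" and r1: "1 \<le> r"
begin

lemma D_open: "open (\<Theta> \<times> (UNIV :: 's set))"
  using Theta_open by (simp add: open_Times)

lemma Df_norm: assumes "x \<in> \<Theta> \<times> UNIV" shows "norm (Df x) \<le> l"
proof (rule norm_blinfun_bound)
  show "0 \<le> l" using l1 by simp
  fix h show "norm (Df x h) \<le> l * norm h"
    using deriv_norm_le_lip[OF D_open assms _ f_lip] f_der assms by blast
qed

lemma DR_norm: assumes "x \<in> \<Theta> \<times> UNIV" shows "norm (DR x) \<le> r"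
proof (rule norm_blinfun_bound)
  show "0 \<le> r" using r1 by simp
  fix h show "norm (DR x h) \<le> r * norm h"
    using deriv_norm_le_lip[OF D_open assms _ R_lip] R_der assms by blast
qed

lemma deriv_step:
  fixes G' :: "'th \<times> 's \<Rightarrow> 'th \<times> 's"
  assumes nN: "n < N"
    and dW: "\<forall>x\<in>\<Theta> \<times> UNIV. (Wv fth Rth p n has_derivative (\<lambda>h. G' x \<bullet> h)) (at x)"
    and Glip: "\<forall>x\<in>\<Theta> \<times> UNIV. \<forall>y\<in>\<Theta> \<times> UNIV. norm (G' x - G' y) \<le> K * dist x y"
    and K: "K \<ge> 0"
    and Bd: "\<forall>x\<in>\<Theta> \<times> UNIV. norm (G' x) \<le> B"
    and intG: "\<forall>x\<in>\<Theta> \<times> UNIV. integrable p (\<lambda>z. G' (fst x, fth x + z))"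
    and x0: "x0 \<in> \<Theta> \<times> UNIV"
  shows "((\<lambda>x. \<integral>z. Wv fth Rth p n (fst x, fth x + z) \<partial>p) has_derivative
          (\<lambda>h. (\<integral>z. G' (fst x0, fth x0 + z) \<partial>p) \<bullet> (fst h, Df x0 h))) (at x0)"
proof -
  let ?W = "Wv fth Rth p n"
  let ?F = "\<lambda>x. \<integral>z. ?W (fst x, fth x + z) \<partial>p"
  define E0 where "E0 = (\<integral>z. G' (fst x0, fth x0 + z) \<partial>p)"
  let ?L = "\<lambda>h. E0 \<bullet> (fst h, Df x0 h)"
  let ?rf = "\<lambda>y. norm (fth y - fth x0 - Df x0 (y - x0))"
  have B0: "B \<ge> 0" using Bd x0 norm_ge_zero order_trans by blast
  obtain rr where rr: "rr > 0" "ball (fst x0) rr \<subseteq> \<Theta>"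
    using Theta_open x0 open_contains_ball by (metis mem_Times_iff)
  have blL: "bounded_linear ?L"
    by (intro bounded_linear_compose[OF bounded_linear_inner_right] bounded_linear_Pair
        bounded_linear_fst blinfun.bounded_linear_right)
  have rf: "((\<lambda>y. ?rf y / norm (y - x0)) \<longlongrightarrow> 0) (at x0)"
    using f_der x0 unfolding has_derivative_iff_norm by blast
  have main: "norm (?F y - ?F x0 - ?L (y - x0)) \<le> K * (1 + l)\<^sup>2 * (norm (y - x0))\<^sup>2 + B * ?rf y"
    if y: "dist y x0 < rr" for y
  proof -
    let ?S = "ball (fst x0) rr \<times> (UNIV :: 's set)"
    have yD: "y \<in> \<Theta> \<times> UNIV"
      using y rr dist_fst_le[of y x0] by (auto simp: mem_Times_iff dist_commute)
    have fy: "fst y \<in> ball (fst x0) rr"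
      using y dist_fst_le[of y x0] by (auto simp: dist_commute)
    define c where "c = (fst (y - x0), Df x0 (y - x0))"
    have pw: "norm (?W (fst y, fth y + z) - ?W (fst x0, fth x0 + z) - G' (fst x0, fth x0 + z) \<bullet> c)
              \<le> K * (1 + l)\<^sup>2 * (norm (y - x0))\<^sup>2 + B * ?rf y" for z
    proof -
      define a where "a = (fst x0, fth x0 + z)"
      define b where "b = (fst y, fth y + z)"
      have aS: "a \<in> ?S" using rr by (simp add: a_def)
      have bS: "b \<in> ?S" using fy by (simp add: b_def)
      have seg: "closed_segment a b \<subseteq> \<Theta> \<times> UNIV"
        using closed_segment_subset[OF aS bS] convex_Times[OF convex_ball convex_UNIV] rr(2)
        by auto
      have aD: "a \<in> \<Theta> \<times> UNIV" using aS rr by auto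
      have rem: "norm (?W b - ?W a - G' a \<bullet> (b - a)) \<le> K * (norm (b - a))\<^sup>2"
        by (rule remainder_bound[OF seg]) (use dW Glip aD K in auto)
      have nba: "norm (b - a) \<le> (1 + l) * norm (y - x0)"
      proof -
        have "b - a = (fst y - fst x0, fth y - fth x0)" by (simp add: a_def b_def)
        then have "norm (b - a) \<le> norm (fst y - fst x0) + norm (fth y - fth x0)"
          by (simp add: norm_Pair_le)
        also have "norm (fst y - fst x0) \<le> norm (y - x0)"
          using nfst[of "y - x0"] by simp
        also have "norm (fth y - fth x0) \<le> l * norm (y - x0)"
          using f_lip yD x0 by (metis dist_norm)
        finally show ?thesis by (simp add: algebra_simps)
      qed
      have sq: "(norm (b - a))\<^sup>2 \<le> ((1 + l) * norm (y - x0))\<^sup>2"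
        using nba by (intro power_mono) auto
      have eq: "?W b - ?W a - G' a \<bullet> c
          = (?W b - ?W a - G' a \<bullet> (b - a)) + G' a \<bullet> (0, fth y - fth x0 - Df x0 (y - x0))"
        by (simp add: a_def b_def c_def inner_prod_def inner_diff_right algebra_simps)
      have "norm (G' a \<bullet> (0, fth y - fth x0 - Df x0 (y - x0))) \<le> norm (G' a) * ?rf y"
        using Cauchy_Schwarz_ineq2[of "G' a" "(0, fth y - fth x0 - Df x0 (y - x0))"]
        by (simp add: norm_Pair)
      also have "\<dots> \<le> B * ?rf y" using Bd aD by (intro mult_right_mono) auto
      finally have t2: "norm (G' a \<bullet> (0, fth y - fth x0 - Df x0 (y - x0))) \<le> B * ?rf y" .
      have t1: "norm (?W b - ?W a - G' a \<bullet> (b - a)) \<le> K * (1 + l)\<^sup>2 * (norm (y - x0))\<^sup>2"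
        using rem mult_left_mono[OF sq K] by (simp add: power_mult_distrib mult_ac)
      show ?thesis unfolding a_def[symmetric] b_def[symmetric] eq
        using norm_triangle_le[OF add_mono[OF t1 t2]] by simp
    qed
    have i1: "integrable p (\<lambda>z. ?W (fst y, fth y + z))" using integ nN yD by blast
    have i2: "integrable p (\<lambda>z. ?W (fst x0, fth x0 + z))" using integ nN x0 by blast
    have i3: "integrable p (\<lambda>z. G' (fst x0, fth x0 + z))" using intG x0 by blast
    have "?F y - ?F x0 - ?L (y - x0) =
        (\<integral>z. ?W (fst y, fth y + z) - ?W (fst x0, fth x0 + z) - G' (fst x0, fth x0 + z) \<bullet> c \<partial>p)"
      using i1 i2 i3 by (simp add: E0_def c_def)
    also have "norm \<dots> \<le> K * (1 + l)\<^sup>2 * (norm (y - x0))\<^sup>2 + B * ?rf y"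
      by (rule int_norm_le[OF prob _ pw]) (use i1 i2 i3 in auto)
    finally show ?thesis .
  qed
  have lim: "((\<lambda>y. norm (?F y - ?F x0 - ?L (y - x0)) / norm (y - x0)) \<longlongrightarrow> 0) (at x0)"
  proof (rule Lim_null_comparison)
    show "\<forall>\<^sub>F y in at x0. norm (norm (?F y - ?F x0 - ?L (y - x0)) / norm (y - x0))
           \<le> K * (1 + l)\<^sup>2 * norm (y - x0) + B * (?rf y / norm (y - x0))"
      unfolding eventually_at
    proof (intro exI[of _ rr] conjI ballI impI)
      show "rr > 0" by fact
      fix y assume "y \<in> UNIV" and y: "y \<noteq> x0 \<and> dist y x0 < rr"
      then have ny: "norm (y - x0) > 0" by simp
      have "norm (?F y - ?F x0 - ?L (y - x0)) / norm (y - x0)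
         \<le> (K * (1 + l)\<^sup>2 * (norm (y - x0))\<^sup>2 + B * ?rf y) / norm (y - x0)"
        using main[of y] y ny by (intro divide_right_mono) auto
      also have "\<dots> = K * (1 + l)\<^sup>2 * norm (y - x0) + B * (?rf y / norm (y - x0))"
        using ny by (simp add: field_simps power2_eq_square)
      finally show "norm (norm (?F y - ?F x0 - ?L (y - x0)) / norm (y - x0))
           \<le> K * (1 + l)\<^sup>2 * norm (y - x0) + B * (?rf y / norm (y - x0))" by simp
    qed
    have l1': "((\<lambda>y. norm (y - x0)) \<longlongrightarrow> 0) (at x0)"
      using tendsto_norm_zero[OF LIM_zero[OF tendsto_ident_at[of x0 UNIV]]] by simp
    show "((\<lambda>y. K * (1 + l)\<^sup>2 * norm (y - x0) + B * (?rf y / norm (y - x0))) \<longlongrightarrow> 0) (at x0)"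
      using tendsto_add[OF tendsto_mult_right_zero[OF l1'] tendsto_mult_right_zero[OF rf]] by simp
  qed
  show ?thesis unfolding E0_def[symmetric]
    using blL lim by (simp add: has_derivative_iff_norm)
qed

end


primrec Sq :: "real \<Rightarrow> real \<Rightarrow> nat \<Rightarrow> real" where
  "Sq l r 0 = 0" | "Sq l r (Suc n) = r + l * Sq l r n"
primrec Am :: "real \<Rightarrow> real \<Rightarrow> nat \<Rightarrow> real" where
  "Am l r 0 = 0" | "Am l r (Suc n) = r + l * l * Am l r n + l * Sq l r n"
primrec Bm :: "real \<Rightarrow> real \<Rightarrow> nat \<Rightarrow> real" where
  "Bm l r 0 = 0" | "Bm l r (Suc n) = r + l * Bm l r n + l * l * Am l r n + l * Sq l r n"
primrec Cm :: "real \<Rightarrow> real \<Rightarrow> nat \<Rightarrow> real" where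
  "Cm l r 0 = 0" | "Cm l r (Suc n) = r + Cm l r n + l * Bm l r n + l * Bm l r n + l * l * Am l r n + l * Sq l r n"

lemma seq_nonneg:
  assumes "0 \<le> l" "0 \<le> r"
  shows "0 \<le> Sq l r n \<and> 0 \<le> Am l r n \<and> 0 \<le> Bm l r n \<and> 0 \<le> Cm l r n"
  using assms by (induction n) auto

definition lipS :: "'th set \<Rightarrow> ('th \<times> 's::metric_space \<Rightarrow> 'y::real_normed_vector) \<Rightarrow> real \<Rightarrow> bool" where
  "lipS \<Theta> H a \<longleftrightarrow> (\<forall>\<theta>\<in>\<Theta>. \<forall>s s'. norm (H (\<theta>, s) - H (\<theta>, s')) \<le> a * dist s s')"
definition lipT :: "'th::metric_space set \<Rightarrow> ('th \<times> 's \<Rightarrow> 'y::real_normed_vector) \<Rightarrow> real \<Rightarrow> bool" where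
  "lipT \<Theta> H a \<longleftrightarrow> (\<forall>\<theta>\<in>\<Theta>. \<forall>\<theta>'\<in>\<Theta>. \<forall>s. norm (H (\<theta>, s) - H (\<theta>', s)) \<le> a * dist \<theta> \<theta>')"

lemma norm_split: "norm (u - v) \<le> norm (fst u - fst v) + norm (snd u - snd v)"
proof -
  have "u - v = (fst u - fst v, snd u - snd v)" by (metis fst_diff snd_diff prod.collapse)
  then show ?thesis using norm_Pair_le by metis
qed

lemma full_lip:
  fixes G :: "'th::real_normed_vector \<times> 's::real_normed_vector \<Rightarrow> 'a::real_normed_vector \<times> 'b::real_normed_vector"
  assumes "lipS \<Theta> (\<lambda>x. snd (G x)) a1" "lipS \<Theta> (\<lambda>x. fst (G x)) a2"
    "lipT \<Theta> (\<lambda>x. snd (G x)) a3" "lipT \<Theta> (\<lambda>x. fst (G x)) a4"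
    "0 \<le> a1" "0 \<le> a2" "0 \<le> a3" "0 \<le> a4"
    and x: "x \<in> \<Theta> \<times> UNIV" and y: "y \<in> \<Theta> \<times> UNIV"
  shows "norm (G x - G y) \<le> (a1 + a2 + a3 + a4) * dist x y"
proof -
  obtain t s t' s' where xy: "x = (t, s)" "y = (t', s')" by (cases x, cases y) auto
  have t: "t \<in> \<Theta>" "t' \<in> \<Theta>" using x y xy by auto
  have dt: "dist t t' \<le> dist x y" using dist_fst_le[of x y] xy by simp
  have ds: "dist s s' \<le> dist x y" using dist_snd_le[of x y] xy by simp
  have n1: "norm (G (t, s) - G (t', s)) \<le> a4 * dist t t' + a3 * dist t t'"
  proof -
    have "norm (G (t, s) - G (t', s)) \<le> norm (fst (G (t, s)) - fst (G (t', s))) + norm (snd (G (t, s)) - snd (G (t', s)))"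
      by (rule norm_split)
    then show ?thesis using assms(3,4) t unfolding lipT_def by (smt (verit))
  qed
  have n2: "norm (G (t', s) - G (t', s')) \<le> a2 * dist s s' + a1 * dist s s'"
  proof -
    have "norm (G (t', s) - G (t', s')) \<le> norm (fst (G (t', s)) - fst (G (t', s'))) + norm (snd (G (t', s)) - snd (G (t', s')))"
      by (rule norm_split)
    then show ?thesis using assms(1,2) t unfolding lipS_def by (smt (verit))
  qed
  have "norm (G x - G y) \<le> norm (G (t, s) - G (t', s)) + norm (G (t', s) - G (t', s'))"
    using norm_triangle_ineq[of "G (t, s) - G (t', s)" "G (t', s) - G (t', s')"] xy by simp
  also have "\<dots> \<le> (a4 + a3) * dist x y + (a2 + a1) * dist x y"
    using n1 n2 mult_left_mono[OF dt, of "a4 + a3"] mult_left_mono[OF ds, of "a2 + a1"] assms(5-8)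
    by (simp add: algebra_simps)
  finally show ?thesis by (simp add: algebra_simps)
qed



context lset begin

definition good :: "nat \<Rightarrow> ('th \<times> 's \<Rightarrow> 'th \<times> 's) \<Rightarrow> bool" where
  "good n G \<longleftrightarrow> (\<forall>x\<in>\<Theta> \<times> UNIV. (Wv fth Rth p n has_derivative (\<lambda>h. G x \<bullet> h)) (at x))
    \<and> (\<exists>B. \<forall>x\<in>\<Theta> \<times> UNIV. norm (G x) \<le> B)
    \<and> (\<forall>x\<in>\<Theta> \<times> UNIV. norm (snd (G x)) \<le> Sq l r n)
    \<and> lipS \<Theta> (\<lambda>x. snd (G x)) (Am l r n) \<and> lipS \<Theta> (\<lambda>x. fst (G x)) (Bm l r n)
    \<and> lipT \<Theta> (\<lambda>x. snd (G x)) (Bm l r n) \<and> lipT \<Theta> (\<lambda>x. fst (G x)) (Cm l r n)"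

lemma good_0: "good 0 (\<lambda>x. 0)"
proof -
  have e: "(\<lambda>h::'th \<times> 's. (0::'th \<times> 's) \<bullet> h) = (\<lambda>h. 0)" by auto
  have "((\<lambda>x::'th \<times> 's. 0::real) has_derivative (\<lambda>h. (0::'th \<times> 's) \<bullet> h)) (at x)" for x
    by (subst e) (rule has_derivative_const)
  then have "\<forall>x\<in>\<Theta> \<times> UNIV. (Wv fth Rth p 0 has_derivative (\<lambda>h. (\<lambda>x. (0::'th \<times> 's)) x \<bullet> h)) (at x)"
    unfolding Wv.simps(1) by blast
  then show ?thesis
    unfolding good_def lipS_def lipT_def
    apply (intro conjI)
    apply assumption
    by auto
qed

lemma l0: "0 \<le> l" and r0: "0 \<le> r" using l1 r1 by auto

lemma nonneg: "0 \<le> Sq l r n" "0 \<le> Am l r n" "0 \<le> Bm l r n" "0 \<le> Cm l r n"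
  using seq_nonneg[OF l0 r0, of n] by auto

lemma kR: assumes "x \<in> \<Theta> \<times> UNIV" "y \<in> \<Theta> \<times> UNIV"
  shows "norm (adj (DR x) 1 - adj (DR y) 1) \<le> r * dist x y"
proof -
  have "norm (adj (DR x) 1 - adj (DR y) 1) = norm (adj (DR x - DR y) 1)" by (simp add: adj_diff_left)
  also have "\<dots> \<le> norm (DR x - DR y) * norm (1::real)" by (rule adj_norm)
  also have "\<dots> \<le> frob (DR x - DR y)" using norm_le_frob by simp
  also have "\<dots> \<le> r * dist x y" using DR_lip assms by blast
  finally show ?thesis .
qed

lemma kA: assumes x: "x \<in> \<Theta> \<times> UNIV" and y: "y \<in> \<Theta> \<times> UNIV" and vy: "norm vy \<le> S"
  shows "norm (adj (Df x) vx - adj (Df y) vy) \<le> l * norm (vx - vy) + l * dist x y * S"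
proof -
  have "adj (Df x) vx - adj (Df y) vy = adj (Df x) (vx - vy) + adj (Df x - Df y) vy"
    by (simp add: adj_diff_left adj_diff_right)
  then have "norm (adj (Df x) vx - adj (Df y) vy) \<le> norm (adj (Df x) (vx - vy)) + norm (adj (Df x - Df y) vy)"
    by (metis norm_triangle_ineq)
  also have "norm (adj (Df x) (vx - vy)) \<le> l * norm (vx - vy)"
    using adj_norm[of "Df x" "vx - vy"] Df_norm[OF x] by (meson mult_right_mono norm_ge_zero order_trans)
  also have "norm (adj (Df x - Df y) vy) \<le> l * dist x y * S"
  proof -
    have "norm (adj (Df x - Df y) vy) \<le> norm (Df x - Df y) * norm vy" by (rule adj_norm)
    also have "\<dots> \<le> (l * dist x y) * S"
    proof (rule mult_mono)
      show "norm (Df x - Df y) \<le> l * dist x y" using norm_le_frob Df_lip x y order_trans by blast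
      show "0 \<le> l * dist x y" using l0 by simp
    qed (use vy in auto)
    finally show ?thesis .
  qed
  finally show ?thesis by simp
qed

end


lemma nsnd_add: "norm (snd u + snd v) \<le> norm u + norm v"
  using norm_triangle_ineq[of "snd u" "snd v"] nsnd[of u] nsnd[of v] by linarith

lemma nfst_add3: "norm (fst u + w + fst v) \<le> norm u + norm w + norm v"
  using norm_triangle_ineq[of "fst u + w" "fst v"] norm_triangle_ineq[of "fst u" w] nfst[of u] nfst[of v] by linarith

context lset begin

lemma good_Suc:
  assumes nN: "n < N" and g: "good n G'"
  shows "\<exists>G. good (Suc n) G"
proof -
  let ?D = "\<Theta> \<times> (UNIV :: 's set)"
  have dW: "\<forall>x\<in>?D. (Wv fth Rth p n has_derivative (\<lambda>h. G' x \<bullet> h)) (at x)"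
    and Sb: "\<forall>x\<in>?D. norm (snd (G' x)) \<le> Sq l r n"
    and L1: "lipS \<Theta> (\<lambda>x. snd (G' x)) (Am l r n)" and L2: "lipS \<Theta> (\<lambda>x. fst (G' x)) (Bm l r n)"
    and L3: "lipT \<Theta> (\<lambda>x. snd (G' x)) (Bm l r n)" and L4: "lipT \<Theta> (\<lambda>x. fst (G' x)) (Cm l r n)"
    using g unfolding good_def by auto
  obtain B' where B': "\<forall>x\<in>?D. norm (G' x) \<le> B'" using g unfolding good_def by auto
  define K where "K = Am l r n + Bm l r n + Bm l r n + Cm l r n"
  have K0: "K \<ge> 0" using nonneg[of n] by (simp add: K_def)
  have Glip: "\<forall>x\<in>?D. \<forall>y\<in>?D. norm (G' x - G' y) \<le> K * dist x y"
    unfolding K_def using full_lip[OF L1 L2 L3 L4] nonneg[of n] by blast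
  have Gcont: "continuous_on ?D G'"
  proof (rule lipschitz_on_continuous_on)
    show "K-lipschitz_on ?D G'" unfolding lipschitz_on_def using Glip K0 by (simp add: dist_norm)
  qed
  interpret P: prob_space p by (rule prob)
  have intG: "\<forall>x\<in>?D. integrable p (\<lambda>z. G' (fst x, fth x + z))"
  proof
    fix x assume x: "x \<in> ?D"
    have c0: "continuous_on UNIV (\<lambda>z. (fst x, fth x + z))"
      by (intro continuous_intros)
    have c: "continuous_on UNIV (\<lambda>z. G' (fst x, fth x + z))"
      by (rule continuous_on_compose2[OF Gcont c0]) (use x in \<open>auto simp: mem_Times_iff\<close>)
    have m: "(\<lambda>z. G' (fst x, fth x + z)) \<in> borel_measurable p"
      unfolding measurable_cong_sets[OF sets_p refl] by (rule borel_measurable_continuous_onI[OF c])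
    show "integrable p (\<lambda>z. G' (fst x, fth x + z))"
      by (rule P.integrable_const_bound[where B=B']) (use B' x m in auto)
  qed
  define E where "E x = (\<integral>z. G' (fst x, fth x + z) \<partial>p)" for x
  define G where "G x = adj (DR x) 1 + (fst (E x), 0) + adj (Df x) (snd (E x))" for x
  have Efst: "norm (fst (E x)) \<le> B'" if "x \<in> ?D" for x
    unfolding E_def
  proof (rule int_lin_le[OF prob _ bounded_linear_fst])
    show "integrable p (\<lambda>z. G' (fst x, fth x + z))" using that intG by blast
    fix z show "norm (fst (G' (fst x, fth x + z))) \<le> B'"
    proof -
      have "norm (G' (fst x, fth x + z)) \<le> B'" using B' that by (auto simp: mem_Times_iff)
      then show ?thesis using nfst[of "G' (fst x, fth x + z)"] by linarith
    qed
  qed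
  have Esnd: "norm (snd (E x)) \<le> Sq l r n" if "x \<in> ?D" for x
    unfolding E_def
  proof (rule int_lin_le[OF prob _ bounded_linear_snd])
    show "integrable p (\<lambda>z. G' (fst x, fth x + z))" using that intG by blast
    fix z show "norm (snd (G' (fst x, fth x + z))) \<le> Sq l r n"
      using Sb that by (auto simp: mem_Times_iff)
  qed
  have der: "(Wv fth Rth p (Suc n) has_derivative (\<lambda>h. G x \<bullet> h)) (at x)" if x: "x \<in> ?D" for x
  proof -
    have d1: "(Rth has_derivative DR x) (at x)" using R_der x by blast
    have d2: "((\<lambda>x. \<integral>z. Wv fth Rth p n (fst x, fth x + z) \<partial>p) has_derivative
          (\<lambda>h. E x \<bullet> (fst h, Df x h))) (at x)"
      unfolding E_def by (rule deriv_step[OF nN dW Glip K0 B' intG x])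
    have eq: "(\<lambda>h. DR x h + E x \<bullet> (fst h, Df x h)) = (\<lambda>h. G x \<bullet> h)"
    proof (rule ext)
      fix h
      have "G x \<bullet> h = adj (DR x) 1 \<bullet> h + (fst (E x), 0) \<bullet> h + adj (Df x) (snd (E x)) \<bullet> h"
        by (simp add: G_def inner_add_left)
      also have "\<dots> = DR x h + fst (E x) \<bullet> fst h + snd (E x) \<bullet> Df x h"
        by (simp only: adj_inner) (simp add: inner_prod_def)
      also have "\<dots> = DR x h + E x \<bullet> (fst h, Df x h)"
        by (simp add: inner_prod_def)
      finally show "DR x h + E x \<bullet> (fst h, Df x h) = G x \<bullet> h" by simp
    qed
    show ?thesis using has_derivative_add[OF d1 d2] unfolding eq by simp
  qed
  have bnd: "norm (G x) \<le> r + B' + l * Sq l r n" if x: "x \<in> ?D" for x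
  proof -
    have "norm (G x) \<le> norm (adj (DR x) 1) + norm ((fst (E x), 0::'s)) + norm (adj (Df x) (snd (E x)))"
      unfolding G_def by (meson norm_triangle_le norm_triangle_ineq add_mono order_refl)
    also have "norm (adj (DR x) 1) \<le> r" using adj_norm[of "DR x" 1] DR_norm[OF x] by simp
    also have "norm ((fst (E x), 0::'s)) \<le> B'" using Efst[OF x] by (simp add: norm_Pair)
    also have "norm (adj (Df x) (snd (E x))) \<le> l * Sq l r n"
      using adj_norm[of "Df x" "snd (E x)"] Df_norm[OF x] Esnd[OF x]
      by (meson mult_mono l0 norm_ge_zero order_trans)
    finally show ?thesis by simp
  qed
  have sbnd: "norm (snd (G x)) \<le> Sq l r (Suc n)" if x: "x \<in> ?D" for x
  proof -
    have "snd (G x) = snd (adj (DR x) 1) + snd (adj (Df x) (snd (E x)))" by (simp add: G_def)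
    then have "norm (snd (G x)) \<le> norm (adj (DR x) 1) + norm (adj (Df x) (snd (E x)))"
      using nsnd_add by metis
    also have "norm (adj (DR x) 1) \<le> r" using adj_norm[of "DR x" 1] DR_norm[OF x] by simp
    also have "norm (adj (Df x) (snd (E x))) \<le> l * Sq l r n"
      using adj_norm[of "Df x" "snd (E x)"] Df_norm[OF x] Esnd[OF x]
      by (meson mult_mono l0 norm_ge_zero order_trans)
    finally show ?thesis by simp
  qed
  have ksnd: "norm (snd (G x) - snd (G y)) \<le> r * dist x y + l * norm (snd (E x) - snd (E y)) + l * dist x y * Sq l r n"
    if x: "x \<in> ?D" and y: "y \<in> ?D" for x y
  proof -
    have "snd (G x) - snd (G y) = snd (adj (DR x) 1 - adj (DR y) 1) + snd (adj (Df x) (snd (E x)) - adj (Df y) (snd (E y)))"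
      by (simp add: G_def)
    then have "norm (snd (G x) - snd (G y)) \<le> norm (adj (DR x) 1 - adj (DR y) 1) + norm (adj (Df x) (snd (E x)) - adj (Df y) (snd (E y)))"
      using nsnd_add by metis
    then show ?thesis using kR[OF x y] kA[OF x y Esnd[OF y], of "snd (E x)"] by simp
  qed
  have kfst: "norm (fst (G x) - fst (G y)) \<le> r * dist x y + norm (fst (E x) - fst (E y)) + l * norm (snd (E x) - snd (E y)) + l * dist x y * Sq l r n"
    if x: "x \<in> ?D" and y: "y \<in> ?D" for x y
  proof -
    have "fst (G x) - fst (G y) = fst (adj (DR x) 1 - adj (DR y) 1) + (fst (E x) - fst (E y)) + fst (adj (Df x) (snd (E x)) - adj (Df y) (snd (E y)))"
      by (simp add: G_def)
    then have "norm (fst (G x) - fst (G y)) \<le> norm (adj (DR x) 1 - adj (DR y) 1) + norm (fst (E x) - fst (E y)) + norm (adj (Df x) (snd (E x)) - adj (Df y) (snd (E y)))"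
      using nfst_add3 by metis
    then show ?thesis using kR[OF x y] kA[OF x y Esnd[OF y], of "snd (E x)"] by simp
  qed
  have Smove: "norm (c (E (t, s)) - c (E (t, s'))) \<le> a * (l * dist s s')"
    if t: "t \<in> \<Theta>" and bl: "bounded_linear c" and lc: "lipS \<Theta> (\<lambda>x. c (G' x)) a" and a: "a \<ge> 0"
    for t s s' and c :: "'th \<times> 's \<Rightarrow> 'y::{banach,second_countable_topology}" and a
    unfolding E_def
  proof (rule int_lin_diff_le[OF prob _ _ bl])
    show "integrable p (\<lambda>z. G' (fst (t, s), fth (t, s) + z))" using intG t by auto
    show "integrable p (\<lambda>z. G' (fst (t, s'), fth (t, s') + z))" using intG t by auto
    fix z
    have "norm (c (G' (fst (t, s), fth (t, s) + z)) - c (G' (fst (t, s'), fth (t, s') + z)))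
       \<le> a * dist (fth (t, s) + z) (fth (t, s') + z)" using lc t unfolding lipS_def fst_conv by blast
    also have "dist (fth (t, s) + z) (fth (t, s') + z) = dist (fth (t, s)) (fth (t, s'))"
      by (simp add: dist_norm)
    also have "\<dots> \<le> l * dist (t, s) (t, s')" using f_lip t by auto
    also have "dist (t, s) (t, s') = dist s s'" by (simp add: dist_Pair_Pair)
    finally show "norm (c (G' (fst (t, s), fth (t, s) + z)) - c (G' (fst (t, s'), fth (t, s') + z)))
       \<le> a * (l * dist s s')" using a by (simp add: mult_left_mono)
  qed
  have Tmove: "norm (c (E (t, s)) - c (E (t', s))) \<le> aT * dist t t' + aS * (l * dist t t')"
    if t: "t \<in> \<Theta>" "t' \<in> \<Theta>" and bl: "bounded_linear c" and lcS: "lipS \<Theta> (\<lambda>x. c (G' x)) aS"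
      and lcT: "lipT \<Theta> (\<lambda>x. c (G' x)) aT" and a: "aS \<ge> 0"
    for t t' s and c :: "'th \<times> 's \<Rightarrow> 'y::{banach,second_countable_topology}" and aS aT
    unfolding E_def
  proof (rule int_lin_diff_le[OF prob _ _ bl])
    show "integrable p (\<lambda>z. G' (fst (t, s), fth (t, s) + z))" using intG t by auto
    show "integrable p (\<lambda>z. G' (fst (t', s), fth (t', s) + z))" using intG t by auto
    fix z
    let ?u = "fth (t, s) + z" and ?v = "fth (t', s) + z"
    have "norm (c (G' (t, ?u)) - c (G' (t', ?v))) \<le> norm (c (G' (t, ?u)) - c (G' (t', ?u))) + norm (c (G' (t', ?u)) - c (G' (t', ?v)))"
      using norm_triangle_ineq[of "c (G' (t, ?u)) - c (G' (t', ?u))" "c (G' (t', ?u)) - c (G' (t', ?v))"] by simp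
    also have "norm (c (G' (t, ?u)) - c (G' (t', ?u))) \<le> aT * dist t t'" using lcT t unfolding lipT_def fst_conv by blast
    also have "norm (c (G' (t', ?u)) - c (G' (t', ?v))) \<le> aS * dist ?u ?v" using lcS t unfolding lipS_def fst_conv by blast
    also have "dist ?u ?v = dist (fth (t, s)) (fth (t', s))" by (simp add: dist_norm)
    also have "\<dots> \<le> l * dist (t, s) (t', s)" using f_lip t by auto
    also have "dist (t, s) (t', s) = dist t t'" by (simp add: dist_Pair_Pair)
    finally show "norm (c (G' (fst (t, s), fth (t, s) + z)) - c (G' (fst (t', s), fth (t', s) + z)))
       \<le> aT * dist t t' + aS * (l * dist t t')" using a by (simp add: mult_left_mono)
  qed
  have dS: "dist (t, s) (t, s') = dist s s'" for t :: 'th and s s' :: 's by (simp add: dist_Pair_Pair)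
  have dT: "dist (t, s) (t', s) = dist t t'" for t t' :: 'th and s :: 's by (simp add: dist_Pair_Pair)
  have A0: "0 \<le> Am l r n" and B0: "0 \<le> Bm l r n" and S0: "0 \<le> Sq l r n" using nonneg by auto
  have P1: "lipS \<Theta> (\<lambda>x. snd (G x)) (Am l r (Suc n))"
    unfolding lipS_def
  proof (intro ballI allI)
    fix t :: 'th and s s' :: 's assume t: "t \<in> \<Theta>"
    let ?d = "dist s s'"
    have xD: "(t, s) \<in> ?D" "(t, s') \<in> ?D" using t by auto
    have m: "norm (snd (E (t, s)) - snd (E (t, s'))) \<le> Am l r n * (l * ?d)"
      by (rule Smove[OF t bounded_linear_snd L1 A0])
    have "l * norm (snd (E (t, s)) - snd (E (t, s'))) \<le> l * (Am l r n * (l * ?d))"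
      by (rule mult_left_mono[OF m l0])
    moreover have "norm (snd (G (t, s)) - snd (G (t, s'))) \<le> r * ?d + l * norm (snd (E (t, s)) - snd (E (t, s'))) + l * ?d * Sq l r n"
      using ksnd[OF xD] unfolding dS .
    moreover have "r * ?d + l * (Am l r n * (l * ?d)) + l * ?d * Sq l r n = Am l r (Suc n) * ?d"
      by (simp add: algebra_simps)
    ultimately show "norm (snd (G (t, s)) - snd (G (t, s'))) \<le> Am l r (Suc n) * ?d" by linarith
  qed
  have P2: "lipS \<Theta> (\<lambda>x. fst (G x)) (Bm l r (Suc n))"
    unfolding lipS_def
  proof (intro ballI allI)
    fix t :: 'th and s s' :: 's assume t: "t \<in> \<Theta>"
    let ?d = "dist s s'"
    have xD: "(t, s) \<in> ?D" "(t, s') \<in> ?D" using t by auto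
    have m: "norm (snd (E (t, s)) - snd (E (t, s'))) \<le> Am l r n * (l * ?d)"
      by (rule Smove[OF t bounded_linear_snd L1 A0])
    have m2: "norm (fst (E (t, s)) - fst (E (t, s'))) \<le> Bm l r n * (l * ?d)"
      by (rule Smove[OF t bounded_linear_fst L2 B0])
    have "l * norm (snd (E (t, s)) - snd (E (t, s'))) \<le> l * (Am l r n * (l * ?d))"
      by (rule mult_left_mono[OF m l0])
    moreover have "norm (fst (G (t, s)) - fst (G (t, s'))) \<le> r * ?d + norm (fst (E (t, s)) - fst (E (t, s'))) + l * norm (snd (E (t, s)) - snd (E (t, s'))) + l * ?d * Sq l r n"
      using kfst[OF xD] unfolding dS .
    moreover have "r * ?d + Bm l r n * (l * ?d) + l * (Am l r n * (l * ?d)) + l * ?d * Sq l r n = Bm l r (Suc n) * ?d"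
      by (simp add: algebra_simps)
    ultimately show "norm (fst (G (t, s)) - fst (G (t, s'))) \<le> Bm l r (Suc n) * ?d" using m2 by linarith
  qed
  have P3: "lipT \<Theta> (\<lambda>x. snd (G x)) (Bm l r (Suc n))"
    unfolding lipT_def
  proof (intro ballI allI)
    fix t t' :: 'th and s :: 's assume t: "t \<in> \<Theta>" and t': "t' \<in> \<Theta>"
    let ?d = "dist t t'"
    have xD: "(t, s) \<in> ?D" "(t', s) \<in> ?D" using t t' by auto
    have m: "norm (snd (E (t, s)) - snd (E (t', s))) \<le> Bm l r n * ?d + Am l r n * (l * ?d)"
      by (rule Tmove[OF t t' bounded_linear_snd L1 L3 A0])
    have "l * norm (snd (E (t, s)) - snd (E (t', s))) \<le> l * (Bm l r n * ?d + Am l r n * (l * ?d))"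
      by (rule mult_left_mono[OF m l0])
    moreover have "norm (snd (G (t, s)) - snd (G (t', s))) \<le> r * ?d + l * norm (snd (E (t, s)) - snd (E (t', s))) + l * ?d * Sq l r n"
      using ksnd[OF xD] unfolding dT .
    moreover have "r * ?d + l * (Bm l r n * ?d + Am l r n * (l * ?d)) + l * ?d * Sq l r n = Bm l r (Suc n) * ?d"
      by (simp add: algebra_simps)
    ultimately show "norm (snd (G (t, s)) - snd (G (t', s))) \<le> Bm l r (Suc n) * ?d" by linarith
  qed
  have P4: "lipT \<Theta> (\<lambda>x. fst (G x)) (Cm l r (Suc n))"
    unfolding lipT_def
  proof (intro ballI allI)
    fix t t' :: 'th and s :: 's assume t: "t \<in> \<Theta>" and t': "t' \<in> \<Theta>"
    let ?d = "dist t t'"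
    have xD: "(t, s) \<in> ?D" "(t', s) \<in> ?D" using t t' by auto
    have m: "norm (snd (E (t, s)) - snd (E (t', s))) \<le> Bm l r n * ?d + Am l r n * (l * ?d)"
      by (rule Tmove[OF t t' bounded_linear_snd L1 L3 A0])
    have m2: "norm (fst (E (t, s)) - fst (E (t', s))) \<le> Cm l r n * ?d + Bm l r n * (l * ?d)"
      by (rule Tmove[OF t t' bounded_linear_fst L2 L4 B0])
    have "l * norm (snd (E (t, s)) - snd (E (t', s))) \<le> l * (Bm l r n * ?d + Am l r n * (l * ?d))"
      by (rule mult_left_mono[OF m l0])
    moreover have "norm (fst (G (t, s)) - fst (G (t', s))) \<le> r * ?d + norm (fst (E (t, s)) - fst (E (t', s))) + l * norm (snd (E (t, s)) - snd (E (t', s))) + l * ?d * Sq l r n"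
      using kfst[OF xD] unfolding dT .
    moreover have "r * ?d + (Cm l r n * ?d + Bm l r n * (l * ?d)) + l * (Bm l r n * ?d + Am l r n * (l * ?d)) + l * ?d * Sq l r n = Cm l r (Suc n) * ?d"
      by (simp add: algebra_simps)
    ultimately show "norm (fst (G (t, s)) - fst (G (t', s))) \<le> Cm l r (Suc n) * ?d" using m2 by linarith
  qed
  have "good (Suc n) G"
    unfolding good_def using der bnd sbnd P1 P2 P3 P4 by blast
  then show ?thesis by blast
qed

lemma good_ex: "n \<le> N \<Longrightarrow> \<exists>G. good n G"
proof (induction n)
  case 0 then show ?case using good_0 by blast
next
  case (Suc n)
  then obtain G' where "good n G'" by auto
  then show ?case using good_Suc[of n G'] Suc.prems by auto
qed

end


lemma seq_bounds:
  fixes l r :: real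
  assumes l: "1 \<le> l" and r: "0 \<le> r"
  shows "Sq l r n \<le> real n * r * l ^ n \<and> Am l r n \<le> (real n)^2 * r * l ^ (2*n)
       \<and> Bm l r n \<le> (real n)^3 * r * l ^ (2*n) \<and> Cm l r n \<le> (real n)^4 * r * l ^ (2*n)"
proof (induction n)
  case 0 then show ?case by simp
next
  case (Suc n)
  let ?m = "real n"
  define P where "P = l ^ (2 * Suc n)"
  define Q where "Q = l ^ (2 * n)"
  have P1: "1 \<le> P" unfolding P_def by (rule one_le_power[OF l])
  have PQ: "l * l * Q = P" unfolding P_def Q_def by (simp add: power_add power2_eq_square mult_ac)
  have lQ: "l * Q \<le> P"
  proof -
    have "Q \<ge> 0" unfolding Q_def using l by simp
    then have "0 \<le> l * Q" using l by simp
    then have "1 * (l * Q) \<le> l * (l * Q)" using l by (intro mult_right_mono) auto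
    then have "l * Q \<le> l * l * Q" by (simp add: mult.assoc)
    then show ?thesis using PQ by simp
  qed
  have lPn: "l * l ^ n \<le> P"
  proof -
    have "l * l ^ n = l ^ Suc n" by simp
    also have "\<dots> \<le> l ^ (2 * Suc n)" by (rule power_increasing[OF _ l]) simp
    finally show ?thesis unfolding P_def .
  qed
  have lPn': "l * l ^ n \<le> l ^ Suc n" by simp
  have r0: "0 \<le> r" by fact
  have m0: "0 \<le> ?m" by simp
  have IS: "Sq l r n \<le> ?m * r * l ^ n" and IA: "Am l r n \<le> ?m^2 * r * Q"
    and IB: "Bm l r n \<le> ?m^3 * r * Q" and IC: "Cm l r n \<le> ?m^4 * r * Q"
    using Suc.IH by (auto simp: Q_def)
  have lS: "l * Sq l r n \<le> ?m * r * P"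
  proof -
    have "l * Sq l r n \<le> l * (?m * r * l ^ n)" using IS l by (simp add: mult_left_mono)
    also have "\<dots> = (?m * r) * (l * l ^ n)" by (simp add: mult_ac)
    also have "\<dots> \<le> (?m * r) * P" using lPn r0 by (intro mult_left_mono) auto
    finally show ?thesis .
  qed
  have lS2: "l * Sq l r n \<le> ?m * r * l ^ Suc n"
  proof -
    have "l * Sq l r n \<le> l * (?m * r * l ^ n)" using IS l by (simp add: mult_left_mono)
    also have "\<dots> = (?m * r) * l ^ Suc n" by (simp add: mult_ac)
    finally show ?thesis .
  qed
  have llA: "l * l * Am l r n \<le> ?m^2 * r * P"
  proof -
    have "l * l * Am l r n \<le> l * l * (?m^2 * r * Q)" using IA l by (simp add: mult_left_mono)
    also have "\<dots> = (?m^2 * r) * (l * l * Q)" by (simp add: mult_ac)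
    finally show ?thesis using PQ by simp
  qed
  have lB: "l * Bm l r n \<le> ?m^3 * r * P"
  proof -
    have "l * Bm l r n \<le> l * (?m^3 * r * Q)" using IB l by (simp add: mult_left_mono)
    also have "\<dots> = (?m^3 * r) * (l * Q)" by (simp add: mult_ac)
    also have "\<dots> \<le> (?m^3 * r) * P" using lQ r0 by (intro mult_left_mono) auto
    finally show ?thesis .
  qed
  have C: "Cm l r n \<le> ?m^4 * r * P"
  proof -
    have "?m^4 * r * Q \<le> ?m^4 * r * P"
    proof (intro mult_left_mono)
      show "Q \<le> P" unfolding P_def Q_def using l by (intro power_increasing) auto
    qed (use r0 in auto)
    then show ?thesis using IC by linarith
  qed
  have rP: "r \<le> r * P" using P1 r0 by (simp add: mult_le_cancel_left1)
  have rl: "r \<le> r * l ^ Suc n"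
    using mult_left_mono[OF one_le_power[OF l, of "Suc n"] r0] by simp
  have s1: "Sq l r (Suc n) \<le> real (Suc n) * r * l ^ Suc n"
    using rl lS2 by (simp add: algebra_simps)
  have rP' : "r * P \<ge> 0" using P1 r0 by simp
  have s2: "Am l r (Suc n) \<le> (real (Suc n))^2 * r * P"
  proof -
    have "Am l r (Suc n) \<le> r * P + ?m^2 * r * P + ?m * r * P" using rP llA lS by simp
    also have "\<dots> = (1 + ?m^2 + ?m) * (r * P)" by (simp add: algebra_simps)
    also have "\<dots> \<le> (real (Suc n))^2 * (r * P)"
      by (intro mult_right_mono[OF _ rP']) (simp add: power2_eq_square algebra_simps)
    finally show ?thesis by (simp add: mult_ac)
  qed
  have s3: "Bm l r (Suc n) \<le> (real (Suc n))^3 * r * P"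
  proof -
    have "Bm l r (Suc n) \<le> r * P + ?m^3 * r * P + ?m^2 * r * P + ?m * r * P" using rP lB llA lS by simp
    also have "\<dots> = (1 + ?m^3 + ?m^2 + ?m) * (r * P)" by (simp add: algebra_simps)
    also have "\<dots> \<le> (real (Suc n))^3 * (r * P)"
      by (intro mult_right_mono[OF _ rP']) (simp add: power3_eq_cube power2_eq_square algebra_simps)
    finally show ?thesis by (simp add: mult_ac)
  qed
  have s4: "Cm l r (Suc n) \<le> (real (Suc n))^4 * r * P"
  proof -
    have "Cm l r (Suc n) \<le> r * P + ?m^4 * r * P + ?m^3 * r * P + ?m^3 * r * P + ?m^2 * r * P + ?m * r * P"
      using rP C lB llA lS by (simp add: mult_ac)
    also have "\<dots> = (1 + ?m^4 + 2 * ?m^3 + ?m^2 + ?m) * (r * P)" by (simp add: algebra_simps)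
    also have "\<dots> \<le> (real (Suc n))^4 * (r * P)"
    proof (intro mult_right_mono[OF _ rP'])
      have "(real (Suc n))^4 = ?m^4 + 4 * ?m^3 + 6 * ?m^2 + 4 * ?m + 1"
        by (simp add: power_def algebra_simps numeral_eq_Suc)
      then show "1 + ?m^4 + 2 * ?m^3 + ?m^2 + ?m \<le> (real (Suc n))^4"
        using m0 by (simp add: zero_le_power)
    qed
    finally show ?thesis by (simp add: mult_ac)
  qed
  show ?case using s1 s2 s3 s4 by (simp add: P_def)
qed



lemma final_arith:
  fixes l r :: real and T t :: nat
  assumes l: "1 \<le> l" and r: "1 \<le> r" and tT: "t \<le> T"
  shows "Am l r (T - t) + Bm l r (T - t) + Bm l r (T - t) + Cm l r (T - t)
         \<le> 44 * real T ^ 5 * r * l powr (4 * (real T - real t - 1))"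
proof -
  define n where "n = T - t"
  have nT: "n \<le> T" by (simp add: n_def)
  have rt: "real T - real t - 1 = real n - 1" using tT by (simp add: n_def of_nat_diff)
  have lp0: "0 \<le> l powr (4 * (real n - 1))" by simp
  have r0: "0 \<le> r" using r by simp
  consider "n = 0" | "n = 1" | "n \<ge> 2" by linarith
  then have "Am l r n + Bm l r n + Bm l r n + Cm l r n
         \<le> 44 * real T ^ 5 * r * l powr (4 * (real n - 1))"
  proof cases
    case 1 then show ?thesis using lp0 r0 by simp
  next
    case 2
    then have T1: "1 \<le> real T" using nT by simp
    have "1 \<le> real T ^ 5" using T1 by (simp add: one_le_power)
    then have "4 * r \<le> 44 * real T ^ 5 * r" using r by (simp add: mult_right_mono)
    then show ?thesis using 2 l by simp
  next
    case 3
    have b: "Am l r n \<le> (real n)^2 * r * l ^ (2*n) \<and> Bm l r n \<le> (real n)^3 * r * l ^ (2*n)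
       \<and> Cm l r n \<le> (real n)^4 * r * l ^ (2*n)" using seq_bounds[OF l r0, of n] by blast
    have m1: "1 \<le> real n" using 3 by simp
    have p2: "(real n)^2 \<le> (real n)^4" and p3: "(real n)^3 \<le> (real n)^4"
      using m1 by (auto intro: power_increasing)
    have p5: "4 * (real n)^4 \<le> 44 * (real n)^5"
    proof -
      have a: "(real n)^4 \<le> (real n)^5" using m1 power_increasing[of 4 5 "real n"] by simp
      have "0 \<le> (real n)^5" by simp
      then show ?thesis using a by linarith
    qed
    have p5': "(real n)^5 \<le> real T ^ 5" using nT by (simp add: power_mono)
    have rl0: "0 \<le> r * l ^ (2*n)" using r l by simp
    have s: "Am l r n + Bm l r n + Bm l r n + Cm l r n \<le> (4 * (real n)^4) * (r * l ^ (2*n))"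
    proof -
      have "(real n)^2 * (r * l ^ (2*n)) \<le> (real n)^4 * (r * l ^ (2*n))"
        by (rule mult_right_mono[OF p2 rl0])
      moreover have "(real n)^3 * (r * l ^ (2*n)) \<le> (real n)^4 * (r * l ^ (2*n))"
        by (rule mult_right_mono[OF p3 rl0])
      ultimately show ?thesis using b by (simp add: algebra_simps)
    qed
    also have "\<dots> \<le> (44 * real T ^ 5) * (r * l ^ (2*n))"
    proof (rule mult_right_mono[OF _ rl0])
      show "4 * (real n)^4 \<le> 44 * real T ^ 5" using p5 p5' by linarith
    qed
    also have "l ^ (2*n) \<le> l ^ (4 * (n - 1))"
      using 3 l by (intro power_increasing) auto
    then have "(44 * real T ^ 5) * (r * l ^ (2*n)) \<le> (44 * real T ^ 5) * (r * l ^ (4 * (n - 1)))"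
      using r by (intro mult_left_mono) auto
    also have "l ^ (4 * (n - 1)) = l powr (4 * (real n - 1))"
    proof -
      obtain k where k: "n = Suc k" using 3 by (cases n) auto
      have e: "4 * (real n - 1) = real (4 * k)" by (simp add: k)
      have "l powr real (4 * k) = l ^ (4 * k)" using l by (intro powr_realpow) simp
      then show ?thesis unfolding e by (simp add: k)
    qed
    finally show ?thesis by (simp add: mult_ac)
  qed
  then show ?thesis unfolding rt n_def .
qed



theorem lemma3:
  fixes f :: "'s::euclidean_space \<Rightarrow> 'a \<Rightarrow> 's"
    and R :: "'s \<Rightarrow> 'a \<Rightarrow> real"
    and pol :: "'th::euclidean_space \<Rightarrow> 's \<Rightarrow> 'a"
    and \<Theta> :: "'th set"
    and p :: "'s measure"
    and T t :: nat
    and Lf LDf LR LDR :: real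
  defines "D \<equiv> \<Theta> \<times> (UNIV :: 's set)"
  defines "fth \<equiv> fcl f pol"
  defines "Rth \<equiv> Rcl R pol"
  assumes Theta_open: "open \<Theta>"
    and noise: "prob_space p" "sets p = sets borel"
    and expect_ok: "\<And>n x. n < T \<Longrightarrow> x \<in> D \<Longrightarrow>
          integrable p (\<lambda>z. Wv fth Rth p n (fst x, fth x + z))"
    and f_lip: "\<forall>x\<in>D. \<forall>y\<in>D. dist (fth x) (fth y) \<le> Lf * dist x y"
    and f_C2: "\<exists>Df :: 'th \<times> 's \<Rightarrow> ('th \<times> 's) \<Rightarrow>\<^sub>L 's.
                 \<exists>D2f :: 'th \<times> 's \<Rightarrow> ('th \<times> 's) \<Rightarrow>\<^sub>L (('th \<times> 's) \<Rightarrow>\<^sub>L 's).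
          (\<forall>x\<in>D. (fth has_derivative blinfun_apply (Df x)) (at x))
        \<and> (\<forall>x\<in>D. (Df has_derivative blinfun_apply (D2f x)) (at x))
        \<and> continuous_on D D2f
        \<and> (\<forall>x\<in>D. \<forall>y\<in>D. frob (Df x - Df y) \<le> LDf * dist x y)"
    and R_lip: "\<forall>x\<in>D. \<forall>y\<in>D. dist (Rth x) (Rth y) \<le> LR * dist x y"
    and R_C2: "\<exists>DR :: 'th \<times> 's \<Rightarrow> ('th \<times> 's) \<Rightarrow>\<^sub>L real.
                 \<exists>D2R :: 'th \<times> 's \<Rightarrow> ('th \<times> 's) \<Rightarrow>\<^sub>L (('th \<times> 's) \<Rightarrow>\<^sub>L real).
          (\<forall>x\<in>D. (Rth has_derivative blinfun_apply (DR x)) (at x))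
        \<and> (\<forall>x\<in>D. (DR has_derivative blinfun_apply (D2R x)) (at x))
        \<and> continuous_on D D2R
        \<and> (\<forall>x\<in>D. \<forall>y\<in>D. frob (DR x - DR y) \<le> LDR * dist x y)"
    and t_le: "t \<le> T"
  shows "\<exists>G :: 'th \<times> 's \<Rightarrow> 'th \<times> 's.
          (\<forall>x\<in>D. (Vt fth Rth p T t has_derivative (\<lambda>h. G x \<bullet> h)) (at x))
        \<and> (\<forall>x\<in>D. \<forall>y\<in>D. norm (G x - G y)
              \<le> 44 * real T ^ 5 * Lbar LDR LR * Lbar LDf Lf powr (4 * (real T - real t - 1)) * dist x y)"
proof -
  obtain Df :: "'th \<times> 's \<Rightarrow> ('th \<times> 's) \<Rightarrow>\<^sub>L 's" where
    fd: "\<forall>x\<in>D. (fth has_derivative blinfun_apply (Df x)) (at x)"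
    and fl: "\<forall>x\<in>D. \<forall>y\<in>D. frob (Df x - Df y) \<le> LDf * dist x y"
    using f_C2 by blast
  obtain DR :: "'th \<times> 's \<Rightarrow> ('th \<times> 's) \<Rightarrow>\<^sub>L real" where
    rd: "\<forall>x\<in>D. (Rth has_derivative blinfun_apply (DR x)) (at x)"
    and rl: "\<forall>x\<in>D. \<forall>y\<in>D. frob (DR x - DR y) \<le> LDR * dist x y"
    using R_C2 by blast
  define l where "l = Lbar LDf Lf"
  define r where "r = Lbar LDR LR"
  have l1: "1 \<le> l" and lLf: "Lf \<le> l" and lLDf: "LDf \<le> l" by (auto simp: l_def Lbar_def)
  have r1: "1 \<le> r" and rLR: "LR \<le> r" and rLDR: "LDR \<le> r" by (auto simp: r_def Lbar_def)
  have up: "a * dist x y \<le> b * dist x y" if "a \<le> b" for a b :: real and x y :: "'th \<times> 's"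
    using that by (simp add: mult_right_mono)
  interpret L: lset \<Theta> fth Rth p T Df DR l r
  proof (rule lset.intro)
    show "open \<Theta>" by fact
    show "prob_space p" by fact
    show "sets p = sets borel" by fact
    show "\<And>n x. n < T \<Longrightarrow> x \<in> \<Theta> \<times> UNIV \<Longrightarrow> integrable p (\<lambda>z. Wv fth Rth p n (fst x, fth x + z))"
      using expect_ok unfolding D_def by blast
    show "\<forall>x\<in>\<Theta> \<times> UNIV. \<forall>y\<in>\<Theta> \<times> UNIV. dist (fth x) (fth y) \<le> l * dist x y"
      using f_lip up[OF lLf] unfolding D_def by (meson order_trans)
    show "\<forall>x\<in>\<Theta> \<times> UNIV. (fth has_derivative blinfun_apply (Df x)) (at x)"
      using fd unfolding D_def by blast
    show "\<forall>x\<in>\<Theta> \<times> UNIV. \<forall>y\<in>\<Theta> \<times> UNIV. frob (Df x - Df y) \<le> l * dist x y"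
      using fl up[OF lLDf] unfolding D_def by (meson order_trans)
    show "\<forall>x\<in>\<Theta> \<times> UNIV. \<forall>y\<in>\<Theta> \<times> UNIV. dist (Rth x) (Rth y) \<le> r * dist x y"
      using R_lip up[OF rLR] unfolding D_def by (meson order_trans)
    show "\<forall>x\<in>\<Theta> \<times> UNIV. (Rth has_derivative blinfun_apply (DR x)) (at x)"
      using rd unfolding D_def by blast
    show "\<forall>x\<in>\<Theta> \<times> UNIV. \<forall>y\<in>\<Theta> \<times> UNIV. frob (DR x - DR y) \<le> r * dist x y"
      using rl up[OF rLDR] unfolding D_def by (meson order_trans)
    show "1 \<le> l" by fact
    show "1 \<le> r" by fact
  qed
  obtain G where g: "L.good (T - t) G" using L.good_ex[of "T - t"] by auto
  have der: "\<forall>x\<in>D. (Vt fth Rth p T t has_derivative (\<lambda>h. G x \<bullet> h)) (at x)"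
    using g unfolding L.good_def Vt_def D_def by blast
  have lips: "lipS \<Theta> (\<lambda>x. snd (G x)) (Am l r (T - t))" "lipS \<Theta> (\<lambda>x. fst (G x)) (Bm l r (T - t))"
    "lipT \<Theta> (\<lambda>x. snd (G x)) (Bm l r (T - t))" "lipT \<Theta> (\<lambda>x. fst (G x)) (Cm l r (T - t))"
    using g unfolding L.good_def by auto
  have fa: "Am l r (T - t) + Bm l r (T - t) + Bm l r (T - t) + Cm l r (T - t)
         \<le> 44 * real T ^ 5 * r * l powr (4 * (real T - real t - 1))"
    by (rule final_arith[OF l1 r1 t_le])
  have lipG: "\<forall>x\<in>D. \<forall>y\<in>D. norm (G x - G y)
              \<le> 44 * real T ^ 5 * Lbar LDR LR * Lbar LDf Lf powr (4 * (real T - real t - 1)) * dist x y"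
  proof (intro ballI)
    fix x y assume x: "x \<in> D" and y: "y \<in> D"
    have "norm (G x - G y) \<le> (Am l r (T - t) + Bm l r (T - t) + Bm l r (T - t) + Cm l r (T - t)) * dist x y"
      using full_lip[OF lips L.nonneg(2) L.nonneg(3) L.nonneg(3) L.nonneg(4)] x y unfolding D_def by blast
    also have "\<dots> \<le> (44 * real T ^ 5 * r * l powr (4 * (real T - real t - 1))) * dist x y"
      by (rule mult_right_mono[OF fa]) simp
    finally show "norm (G x - G y)
              \<le> 44 * real T ^ 5 * Lbar LDR LR * Lbar LDf Lf powr (4 * (real T - real t - 1)) * dist x y"
      by (simp add: l_def r_def)
  qed
  show ?thesis using der lipG by blast
qed


end
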